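(* Let $k\le n$ be positive integers, $m=\binom nk$, let $\nu$ be a vector norm on $\mathbb{C}^n$ and $\mu$ an absolute operator norm on $\mathbb{C}^{m\times m}$. For $A\in\mathbb{C}^{n\times n}$ with eigenvalues $\lambda_1(A),\ldots,\lambda_n(A)$ ordered so that $|\lambda_1(A)|\ge\cdots\ge|\lambda_n(A)|$, $$\left|\prod_{i=1}^k\lambda_i(A)\right|\le\theta_k(\mu,\nu)\min\left\{\max_{|\alpha|=k}\prod_{i\in\alpha}\nu(\mathrm{col}_i(A)),\ \max_{|\alpha|=k}\prod_{i\in\alpha}\nu(\mathrm{row}_i(A))\right\},$$ where the maxima are over subsets $\alpha\subseteq\{1,\ldots,n\}$ with $|\alpha|=k$.
   Context: $\mathrm{col}_i(A)$ is the $i$th column of $A$ and $\mathrm{row}_i(A)\in\mathbb{C}^n$ is the transpose of the $i$th row. $C_k(B)$ is the $k$th compound of $B$ (the $\binom nk\times\binom nk$ matrix of $k\times k$ minors). $\theta_k(\mu,\nu)=\max\{\mu(C_k(B)): B\in\mathbb{C}^{n\times n},\ \nu(\mathrm{col}_i(B))=1,\ i=1,\ldots,n\}$. An absolute operator norm is a matrix norm induced by an absolute vector norm. *)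

theory Defs
  imports "Jordan_Normal_Form.Char_Poly" "Jordan_Normal_Form.DL_Submatrix"
begin

definition vec_norm_on :: "nat \<Rightarrow> (complex vec \<Rightarrow> real) \<Rightarrow> bool" where
  "vec_norm_on n \<nu> \<longleftrightarrow>
     (\<forall>x\<in>carrier_vec n. 0 \<le> \<nu> x \<and> (\<nu> x = 0 \<longleftrightarrow> x = 0\<^sub>v n)) \<and>
     (\<forall>x\<in>carrier_vec n. \<forall>c. \<nu> (c \<cdot>\<^sub>v x) = cmod c * \<nu> x) \<and>
     (\<forall>x\<in>carrier_vec n. \<forall>y\<in>carrier_vec n. \<nu> (x + y) \<le> \<nu> x + \<nu> y)"

text \<open>Index set of C^m, m = n choose k: the k-subsets of {0..<n}.\<close>
definition ksubsets :: "nat \<Rightarrow> nat \<Rightarrow> nat set set" where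
  "ksubsets n k = {\<alpha>. \<alpha> \<subseteq> {0..<n} \<and> card \<alpha> = k}"

text \<open>C^m realised as functions on the k-subsets (zero outside).\<close>
definition cvecs :: "nat \<Rightarrow> nat \<Rightarrow> (nat set \<Rightarrow> complex) set" where
  "cvecs n k = {x. \<forall>\<alpha>. \<alpha> \<notin> ksubsets n k \<longrightarrow> x \<alpha> = 0}"

definition abs_vec_norm_on :: "nat \<Rightarrow> nat \<Rightarrow> ((nat set \<Rightarrow> complex) \<Rightarrow> real) \<Rightarrow> bool" where
  "abs_vec_norm_on n k \<eta> \<longleftrightarrow>
     (\<forall>x\<in>cvecs n k. 0 \<le> \<eta> x \<and> (\<eta> x = 0 \<longleftrightarrow> x = (\<lambda>_. 0))) \<and>
     (\<forall>x\<in>cvecs n k. \<forall>c. \<eta> (\<lambda>\<alpha>. c * x \<alpha>) = cmod c * \<eta> x) \<and>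
     (\<forall>x\<in>cvecs n k. \<forall>y\<in>cvecs n k. \<eta> (\<lambda>\<alpha>. x \<alpha> + y \<alpha>) \<le> \<eta> x + \<eta> y) \<and>
     (\<forall>x\<in>cvecs n k. \<forall>y\<in>cvecs n k. (\<forall>\<alpha>. cmod (x \<alpha>) = cmod (y \<alpha>)) \<longrightarrow> \<eta> x = \<eta> y)"

text \<open>m x m matrices indexed by k-subsets, acting on C^m.\<close>
definition cmat_apply :: "nat \<Rightarrow> nat \<Rightarrow> (nat set \<Rightarrow> nat set \<Rightarrow> complex) \<Rightarrow> (nat set \<Rightarrow> complex) \<Rightarrow> (nat set \<Rightarrow> complex)" where
  "cmat_apply n k M x = (\<lambda>\<alpha>. if \<alpha> \<in> ksubsets n k then (\<Sum>\<beta>\<in>ksubsets n k. M \<alpha> \<beta> * x \<beta>) else 0)"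

definition op_norm :: "nat \<Rightarrow> nat \<Rightarrow> ((nat set \<Rightarrow> complex) \<Rightarrow> real) \<Rightarrow> (nat set \<Rightarrow> nat set \<Rightarrow> complex) \<Rightarrow> real" where
  "op_norm n k \<eta> M = (SUP x\<in>cvecs n k - {\<lambda>_. 0}. \<eta> (cmat_apply n k M x) / \<eta> x)"

definition compound :: "nat \<Rightarrow> complex mat \<Rightarrow> nat set \<Rightarrow> nat set \<Rightarrow> complex" where
  "compound k B = (\<lambda>\<alpha> \<beta>. if \<alpha> \<in> ksubsets (dim_row B) k \<and> \<beta> \<in> ksubsets (dim_row B) k
                           then det (submatrix B \<alpha> \<beta>) else 0)"

definition theta :: "nat \<Rightarrow> nat \<Rightarrow> ((nat set \<Rightarrow> complex) \<Rightarrow> real) \<Rightarrow> (complex vec \<Rightarrow> real) \<Rightarrow> real" where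
  "theta n k \<eta> \<nu> = Sup {op_norm n k \<eta> (compound k B) | B.
       B \<in> carrier_mat n n \<and> (\<forall>i<n. \<nu> (col B i) = 1)}"

end

theory Submission
  imports Defs "Jordan_Normal_Form.Schur_Decomposition"
begin

lemma pick_atLeast0: "j < k \<Longrightarrow> pick {0..<k} j = j"
proof -
  assume "j < k"
  hence "pick UNIV j = pick {a. a < k \<and> a \<in> UNIV} j" by (intro pick_reduce_set) auto
  moreover have "{a. a < k \<and> a \<in> UNIV} = {0..<k}" by auto
  ultimately show ?thesis by (simp add: pick_UNIV)
qed

lemma pick_image: assumes "finite B" shows "pick B ` {0..<card B} = B"
proof
  show "pick B ` {0..<card B} \<subseteq> B" using pick_in_set_le by auto
  show "B \<subseteq> pick B ` {0..<card B}"
  proof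
    fix x assume x: "x \<in> B"
    have "{a\<in>B. a < x} \<subset> B" using x by auto
    hence "card {a\<in>B. a < x} < card B" using assms psubset_card_mono by blast
    thus "x \<in> pick B ` {0..<card B}" using pick_card_in_set[OF x] by (intro image_eqI[of _ _ "card {a\<in>B. a < x}"]) auto
  qed
qed

lemma pick_inj: "i < card B \<Longrightarrow> j < card B \<Longrightarrow> pick B i = pick B j \<Longrightarrow> i = j"
  by (metis linorder_neqE_nat pick_mono_le less_irrefl)

lemma card_ksub: "\<beta> \<in> ksubsets n k \<Longrightarrow> card {i. i < n \<and> i \<in> \<beta>} = k"
proof -
  assume "\<beta> \<in> ksubsets n k"
  hence "{i. i < n \<and> i \<in> \<beta>} = \<beta>" "card \<beta> = k" unfolding ksubsets_def by auto
  thus ?thesis by simp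
qed

lemma finite_ksubsets: "finite (ksubsets n k)"
  unfolding ksubsets_def by (rule finite_subset[of _ "Pow {0..<n}"]) auto

lemma ksub_finite: "\<beta> \<in> ksubsets n k \<Longrightarrow> finite \<beta>" "\<beta> \<in> ksubsets n k \<Longrightarrow> card \<beta> = k"
   "\<beta> \<in> ksubsets n k \<Longrightarrow> \<beta> \<subseteq> {0..<n}"
  unfolding ksubsets_def using finite_subset by auto


lemma submatrix_carrier_ks:
  assumes "A \<in> carrier_mat n n" "\<alpha> \<in> ksubsets n k" "\<beta> \<in> ksubsets n k"
  shows "submatrix A \<alpha> \<beta> \<in> carrier_mat k k"
  using assms card_ksub unfolding carrier_mat_def by (auto simp: dim_submatrix)

lemma cauchy_binet:
  fixes X Y :: "'a::comm_ring_1 mat"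
  assumes X: "X \<in> carrier_mat k n" and Y: "Y \<in> carrier_mat n k"
  shows "det (X*Y) = (\<Sum>\<beta>\<in>ksubsets n k. det (submatrix X UNIV \<beta>) * det (submatrix Y \<beta> UNIV))"
proof -
  let ?U = "{0..<k}"
  let ?F = "{f. (\<forall>i\<in>?U. f i \<in> {0..<n}) \<and> (\<forall>i. i \<notin> ?U \<longrightarrow> f i = i)}"
  let ?g = "\<lambda>f. det (mat\<^sub>r k k (\<lambda>i. X $$ (i, f i) \<cdot>\<^sub>v row Y (f i)))"
  let ?h = "\<lambda>f. prod (\<lambda>i. X $$ (i, f i)) ?U * det (mat\<^sub>r k k (\<lambda>i. row Y (f i)))"
  have fF: "finite ?F" by (rule finite_bounded_functions) auto
  define JJ where "JJ = (\<lambda>(\<beta>,\<sigma>). (\<lambda>i. if i < k then pick \<beta> (\<sigma> (i::nat)) else i))"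
  define II where "II = (\<lambda>f::nat\<Rightarrow>nat. (f ` ?U, \<lambda>i. if i < k then card {a \<in> f ` ?U. a < f i} else (i::nat)))"
  have "det (X*Y) = sum ?g ?F"
    unfolding mat_mul_finsum_alt[OF X Y]
    by (rule det_linear_rows_sum, insert X Y, auto)
  also have "\<dots> = sum ?h ?F"
    by (rule sum.cong[OF refl], rule det_rows_mul, insert Y, auto)
  also have "\<dots> = sum ?h {f \<in> ?F. inj_on f ?U}"
  proof (rule sum.mono_neutral_right[OF fF])
    show "{f \<in> ?F. inj_on f ?U} \<subseteq> ?F" by auto
    show "\<forall>f\<in>?F - {f \<in> ?F. inj_on f ?U}. ?h f = 0"
    proof
      fix f assume f: "f \<in> ?F - {f \<in> ?F. inj_on f ?U}"
      then obtain i j where ij: "f i = f j" "i \<noteq> j" "i < k" "j < k" unfolding inj_on_def by auto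
      have "det (mat\<^sub>r k k (\<lambda>i. row Y (f i))) = 0"
        by (rule det_identical_rows[OF _ ij(2-4)], insert ij Y, auto simp: row_mat_of_row_fun)
      thus "?h f = 0" by simp
    qed
  qed
  also have "\<dots> = sum (\<lambda>a. ?h (JJ a)) (ksubsets n k \<times> {p. p permutes ?U})"
  proof (rule sym, rule sum.reindex_bij_witness[where i=II and j=JJ])
    fix a assume a: "a \<in> ksubsets n k \<times> {p. p permutes ?U}"
    obtain \<beta> \<sigma> where a_def: "a = (\<beta>, \<sigma>)" by force
    note JJ_def[simp] II_def[simp]
    have bK: "\<beta> \<in> ksubsets n k" and s: "\<sigma> permutes ?U" using a a_def by auto
    have b: "finite \<beta>" "card \<beta> = k" "\<beta> \<subseteq> {0..<n}" using ksub_finite[OF bK] by auto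
    have sU: "\<And>i. i < k \<Longrightarrow> \<sigma> i < k" using permutes_in_image[OF s] by auto
    let ?f = "\<lambda>i. if i < k then pick \<beta> (\<sigma> i) else i"
    have im: "?f ` ?U = \<beta>"
    proof -
      have "?f ` ?U = pick \<beta> ` (\<sigma> ` ?U)" by (auto simp: image_image)
      also have "\<sigma> ` ?U = ?U" using permutes_image[OF s] .
      finally show ?thesis using pick_image[OF b(1)] b(2) by simp
    qed
    show "JJ a \<in> {f \<in> ?F. inj_on f ?U}"
    proof -
      have "\<forall>i\<in>?U. ?f i \<in> {0..<n}"
      proof
        fix i assume "i \<in> ?U"
        hence "pick \<beta> (\<sigma> i) \<in> \<beta>" using pick_in_set_le[of "\<sigma> i" \<beta>] sU b(2) by auto
        thus "?f i \<in> {0..<n}" using b(3) \<open>i \<in> ?U\<close> by auto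
      qed
      moreover have "inj_on ?f ?U"
      proof (rule inj_onI)
        fix x y assume xy: "x \<in> ?U" "y \<in> ?U" "?f x = ?f y"
        hence "\<sigma> x = \<sigma> y" using pick_inj[of "\<sigma> x" \<beta> "\<sigma> y"] sU b(2) by auto
        thus "x = y" using permutes_inj[OF s] unfolding inj_def by auto
      qed
      ultimately show ?thesis unfolding a_def by auto
    qed
    show "II
        (JJ a) = a"
    proof -
      have eq: "(\<lambda>i. if i < k then card {a \<in> \<beta>. a < ?f i} else i) = \<sigma>"
      proof
        fix i show "(if i < k then card {a \<in> \<beta>. a < ?f i} else i) = \<sigma> i"
          using card_pick_le[of "\<sigma> i" \<beta>] sU b(2) permutes_not_in[OF s, of i] by auto
      qed
      show ?thesis unfolding a_def II_def JJ_def prod.case by (simp only: im eq prod.inject simp_thms)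
    qed
  next
    fix f assume f: "f \<in> {f \<in> ?F. inj_on f ?U}"
    note JJ_def[simp] II_def[simp]
    let ?\<beta> = "f ` ?U"
    let ?\<sigma> = "\<lambda>i. if i < k then card {a \<in> ?\<beta>. a < f i} else i"
    have cb: "card ?\<beta> = k" using f card_image[of f ?U] by auto
    have fb: "finite ?\<beta>" by auto
    have sl: "?\<sigma> i < k" if "i < k" for i
    proof -
      have "{a \<in> ?\<beta>. a < f i} \<subset> ?\<beta>" using that by auto
      hence "card {a \<in> ?\<beta>. a < f i} < card ?\<beta>" using psubset_card_mono[OF fb] by blast
      thus ?thesis using that cb by simp
    qed
    have pk: "pick ?\<beta> (?\<sigma> i) = f i" if "i < k" for i
      using that pick_card_in_set[of "f i" ?\<beta>] by auto
    show "JJ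
       (II f) = f"
    proof
      fix i show "JJ
       (II f) i = f i"
        using pk[of i] f by auto
    qed
    show "II f
       \<in> ksubsets n k \<times> {p. p permutes ?U}"
    proof -
      have "?\<beta> \<in> ksubsets n k" using f cb unfolding ksubsets_def by auto
      moreover have "?\<sigma> permutes ?U"
      proof (rule inj_on_nat_permutes)
        show "inj_on ?\<sigma> ?U"
        proof (rule inj_onI)
          fix x y assume xy: "x \<in> ?U" "y \<in> ?U" "?\<sigma> x = ?\<sigma> y"
          hence "f x = f y" using pk[of x] pk[of y] by auto
          thus "x = y" using f xy(1,2) unfolding inj_on_def by auto
        qed
        show "?\<sigma> \<in> ?U \<rightarrow> ?U" using sl by auto
      qed auto
      ultimately show ?thesis by auto
    qed
  qed simp
  also have "\<dots> = sum (\<lambda>(\<beta>,\<sigma>). ?h (\<lambda>i. if i < k then pick \<beta> (\<sigma> i) else i)) (ksubsets n k \<times> {p. p permutes ?U})"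
    unfolding JJ_def by (simp add: case_prod_unfold)
  also have "\<dots> = (\<Sum>\<beta>\<in>ksubsets n k. \<Sum>\<sigma>\<in>{p. p permutes ?U}. ?h (\<lambda>i. if i < k then pick \<beta> (\<sigma> i) else i))"
    by (rule sum.cartesian_product[symmetric])
  also have "\<dots> = (\<Sum>\<beta>\<in>ksubsets n k. det (submatrix X UNIV \<beta>) * det (submatrix Y \<beta> UNIV))"
  proof (rule sum.cong[OF refl])
    fix \<beta> assume bK: "\<beta> \<in> ksubsets n k"
    have ck: "card {i. i < n \<and> i \<in> \<beta>} = k" using card_ksub[OF bK] .
    have ck2: "card {i. i < k \<and> i \<in> UNIV} = k" by simp
    have b: "card \<beta> = k" "\<beta> \<subseteq> {0..<n}" using ksub_finite bK by auto
    have pb: "pick \<beta> j < n" if "j < k" for j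
    proof -
      have "pick \<beta> j \<in> \<beta>" using pick_in_set_le[of j \<beta>] b that by auto
      thus ?thesis using b by auto
    qed
    have Yb: "submatrix Y \<beta> UNIV \<in> carrier_mat k k" using Y ck unfolding carrier_mat_def by (auto simp: dim_submatrix)
    have Xb: "submatrix X UNIV \<beta> \<in> carrier_mat k k" using X ck unfolding carrier_mat_def by (auto simp: dim_submatrix)
    {
      fix \<sigma> assume s: "\<sigma> \<in> {p. p permutes ?U}"
      hence s: "\<sigma> permutes ?U" by simp
      have sU: "\<And>i. i < k \<Longrightarrow> \<sigma> i < k" using permutes_in_image[OF s] by auto
      have "mat\<^sub>r k k (\<lambda>i. row Y (if i < k then pick \<beta> (\<sigma> i) else i)) = mat k k (\<lambda>(i,j). submatrix Y \<beta> UNIV $$ (\<sigma> i, j))"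
      proof (rule eq_matI)
        fix i j assume ij: "i < dim_row (mat k k (\<lambda>(i,j). submatrix Y \<beta> UNIV $$ (\<sigma> i, j)))"
           "j < dim_col (mat k k (\<lambda>(i,j). submatrix Y \<beta> UNIV $$ (\<sigma> i, j)))"
        hence ij: "i < k" "j < k" by auto
        show "mat\<^sub>r k k (\<lambda>i. row Y (if i < k then pick \<beta> (\<sigma> i) else i)) $$ (i, j) =
          mat k k (\<lambda>(i,j). submatrix Y \<beta> UNIV $$ (\<sigma> i, j)) $$ (i, j)"
          using ij Y sU[OF ij(1)] pb[OF sU[OF ij(1)]] submatrix_index[of "\<sigma> i" Y \<beta> j UNIV] ck
          by (auto simp: pick_UNIV)
      qed auto
      hence "det (mat\<^sub>r k k (\<lambda>i. row Y (if i < k then pick \<beta> (\<sigma> i) else i))) = signof \<sigma> * det (submatrix Y \<beta> UNIV)"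
        using det_permute_rows[OF Yb s] by simp
      moreover have "prod (\<lambda>i. X $$ (i, if i < k then pick \<beta> (\<sigma> i) else i)) ?U
          = prod (\<lambda>i. submatrix X UNIV \<beta> $$ (i, \<sigma> i)) ?U"
        by (rule prod.cong[OF refl], insert X sU ck, auto simp: submatrix_index pick_UNIV)
      ultimately have "?h (\<lambda>i. if i < k then pick \<beta> (\<sigma> i) else i) =
         (signof \<sigma> * prod (\<lambda>i. submatrix X UNIV \<beta> $$ (i, \<sigma> i)) ?U) * det (submatrix Y \<beta> UNIV)"
        by simp
    }
    hence "(\<Sum>\<sigma>\<in>{p. p permutes ?U}. ?h (\<lambda>i. if i < k then pick \<beta> (\<sigma> i) else i))
       = (\<Sum>\<sigma>\<in>{p. p permutes ?U}. (signof \<sigma> * prod (\<lambda>i. submatrix X UNIV \<beta> $$ (i, \<sigma> i)) ?U) * det (submatrix Y \<beta> UNIV))"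
      by (intro sum.cong) auto
    also have "\<dots> = det (submatrix X UNIV \<beta>) * det (submatrix Y \<beta> UNIV)"
      unfolding det_def'[OF Xb] sum_distrib_right by simp
    finally show "(\<Sum>\<sigma>\<in>{p. p permutes ?U}. ?h (\<lambda>i. if i < k then pick \<beta> (\<sigma> i) else i))
       = det (submatrix X UNIV \<beta>) * det (submatrix Y \<beta> UNIV)" .
  qed
  finally show ?thesis .
qed


lemma prod_list_nth_conv: "(\<Prod>e\<leftarrow>xs. f e) = (\<Prod>i<length xs. f (xs!i))"
  by (induction xs) (simp_all add: prod.lessThan_Suc_shift del: prod.lessThan_Suc)

lemma submatrix_mult_rows:
  assumes A: "A \<in> carrier_mat n m" and B: "B \<in> carrier_mat m p"
  shows "submatrix (A * B) I UNIV = submatrix A I UNIV * B"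
proof (rule eq_matI)
  show "dim_row (submatrix (A * B) I UNIV) = dim_row (submatrix A I UNIV * B)"
    using A B by (simp add: dim_submatrix)
  show "dim_col (submatrix (A * B) I UNIV) = dim_col (submatrix A I UNIV * B)"
    using A B by (simp add: dim_submatrix)
  fix i j assume i: "i < dim_row (submatrix A I UNIV * B)" and j: "j < dim_col (submatrix A I UNIV * B)"
  have i': "i < card {i. i < n \<and> i \<in> I}" using i A by (simp add: dim_submatrix)
  have j': "j < p" using j B by (simp add: dim_submatrix)
  have pi: "pick I i < n" using pick_le[OF i'] .
  have "submatrix (A * B) I UNIV $$ (i, j) = (A * B) $$ (pick I i, j)"
    using submatrix_index[of i "A*B" I j UNIV] i' j' A B by (simp add: pick_UNIV)
  also have "\<dots> = (\<Sum>l<m. A $$ (pick I i, l) * B $$ (l, j))"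
    using A B pi j' by (simp add: scalar_prod_def lessThan_atLeast0)
  also have "\<dots> = (submatrix A I UNIV * B) $$ (i, j)"
    using A B i' j' by (simp add: dim_submatrix scalar_prod_def submatrix_index pick_UNIV lessThan_atLeast0)
  finally show "submatrix (A * B) I UNIV $$ (i, j) = (submatrix A I UNIV * B) $$ (i, j)" .
qed

lemma submatrix_sub_rows:
  assumes A: "A \<in> carrier_mat n n" and a: "\<alpha> \<in> ksubsets n k" and b: "\<beta> \<in> ksubsets n k"
  shows "submatrix (submatrix A \<alpha> UNIV) UNIV \<beta> = submatrix A \<alpha> \<beta>"
proof -
  have ca: "card {i. i < n \<and> i \<in> \<alpha>} = k" and cb: "card {i. i < n \<and> i \<in> \<beta>} = k"
    using card_ksub a b by auto
  have bb: "card \<beta> = k" "\<beta> \<subseteq> {0..<n}" using ksub_finite[OF b] by auto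
  show ?thesis
  proof (rule eq_matI)
    show "dim_row (submatrix (submatrix A \<alpha> UNIV) UNIV \<beta>) = dim_row (submatrix A \<alpha> \<beta>)"
      using A ca by (simp add: dim_submatrix)
    show "dim_col (submatrix (submatrix A \<alpha> UNIV) UNIV \<beta>) = dim_col (submatrix A \<alpha> \<beta>)"
      using A ca cb by (simp add: dim_submatrix)
    fix i j assume i: "i < dim_row (submatrix A \<alpha> \<beta>)" and j: "j < dim_col (submatrix A \<alpha> \<beta>)"
    hence i': "i < k" and j': "j < k" using A ca cb by (auto simp: dim_submatrix)
    have pj: "pick \<beta> j < n" using pick_in_set_le[of j \<beta>] bb j' by auto
    show "submatrix (submatrix A \<alpha> UNIV) UNIV \<beta> $$ (i, j) = submatrix A \<alpha> \<beta> $$ (i, j)"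
      using i' j' pj A ca cb by (simp add: dim_submatrix submatrix_index pick_UNIV)
  qed
qed

lemma submatrix_rows_carrier:
  assumes "A \<in> carrier_mat n m" "\<alpha> \<in> ksubsets n k"
  shows "submatrix A \<alpha> UNIV \<in> carrier_mat k m"
proof -
  have 1: "card {i. i < dim_row A \<and> i \<in> \<alpha>} = k" using card_ksub[OF assms(2)] assms(1) by auto
  have 2: "card {j. j < dim_col A \<and> j \<in> (UNIV::nat set)} = m" using assms(1) by auto
  show ?thesis unfolding carrier_mat_def by (simp only: dim_submatrix 1 2 mem_Collect_eq simp_thms)
qed
lemma eigen_compound:
  fixes A :: "complex mat"
  assumes A: "A \<in> carrier_mat n n" and kn: "k \<le> n" and les: "length es = n"
    and cp: "char_poly A = (\<Prod>i<n. [:- (es ! i), 1:])"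
  shows "\<exists>x. x \<in> cvecs n k \<and> x \<noteq> (\<lambda>_. 0) \<and>
     cmat_apply n k (compound k A) x = (\<lambda>\<alpha>. (\<Prod>i<k. es ! i) * x \<alpha>)"
proof -
  have cp': "char_poly A = (\<Prod>e\<leftarrow>es. [:- e, 1:])" unfolding cp prod_list_nth_conv les ..
  obtain T P Q where sd: "schur_decomposition A es = (T, P, Q)" by (cases "schur_decomposition A es") auto
  from schur_decomposition[OF A cp' sd] have sim: "similar_mat_wit A T P Q"
    and ut: "upper_triangular T" and dg: "diag_mat T = es" by auto
  from sim A have T: "T \<in> carrier_mat n n" and P: "P \<in> carrier_mat n n" and Q: "Q \<in> carrier_mat n n"
    and PQ: "P * Q = 1\<^sub>m n" and QP: "Q * P = 1\<^sub>m n" and APTQ: "A = P * T * Q"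
    unfolding similar_mat_wit_def Let_def by auto
  have AP: "A * P = P * T"
  proof -
    have "A * P = P * T * (Q * P)" unfolding APTQ
      by (rule assoc_mult_mat[of "P*T" n n Q n P n], insert P T Q, auto)
    also have "\<dots> = P * T" unfolding QP by (rule right_mult_one_mat, insert P T, auto)
    finally show ?thesis .
  qed
  define E :: "complex mat" where "E = mat n k (\<lambda>(l,j). if l = j then 1 else 0)"
  define Tk where "Tk = mat k k (\<lambda>(i,j). T $$ (i,j))"
  define W where "W = P * E"
  have E: "E \<in> carrier_mat n k" unfolding E_def by simp
  have Tk: "Tk \<in> carrier_mat k k" unfolding Tk_def by simp
  have W: "W \<in> carrier_mat n k" unfolding W_def using P E by simp
  have TE: "T * E = E * Tk"
  proof (rule eq_matI)
    fix i j assume ij: "i < dim_row (E * Tk)" "j < dim_col (E * Tk)"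
    hence i: "i < n" and j: "j < k" using E Tk by auto
    have "(T * E) $$ (i, j) = (\<Sum>l<n. T $$ (i, l) * (if l = j then 1 else 0))"
      using T E i j kn by (simp add: scalar_prod_def E_def lessThan_atLeast0)
    also have "\<dots> = (\<Sum>l<n. if l = j then T $$ (i, l) else 0)" by (rule sum.cong) auto
    also have "\<dots> = T $$ (i, j)" using j kn by simp
    also have "\<dots> = (\<Sum>l<k. (if i = l then 1 else 0) * Tk $$ (l, j))"
    proof (cases "i < k")
      case True
      have "(\<Sum>l<k. (if i = l then 1 else 0) * Tk $$ (l, j)) = (\<Sum>l<k. if l = i then Tk $$ (l, j) else 0)"
        by (rule sum.cong) auto
      also have "\<dots> = T $$ (i, j)" using True j by (simp add: Tk_def)
      finally show ?thesis by simp
    next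
      case False
      hence "T $$ (i, j) = 0" using ut T i j unfolding upper_triangular_def by auto
      thus ?thesis using False by simp
    qed
    also have "\<dots> = (E * Tk) $$ (i, j)"
      using E Tk i j by (simp add: scalar_prod_def E_def lessThan_atLeast0)
    finally show "(T * E) $$ (i, j) = (E * Tk) $$ (i, j)" .
  qed (insert T E Tk, auto)
  have AW: "A * W = W * Tk"
  proof -
    have "A * W = (A * P) * E" unfolding W_def using A P E by simp
    also have "\<dots> = P * (T * E)" unfolding AP using P T E by simp
    also have "\<dots> = W * Tk" unfolding TE W_def using P E Tk by simp
    finally show ?thesis .
  qed
  have detTk: "det Tk = (\<Prod>i<k. es ! i)"
  proof -
    have "upper_triangular Tk" using ut T kn unfolding upper_triangular_def Tk_def by auto
    hence "det Tk = prod_list (diag_mat Tk)" by (rule det_upper_triangular[OF _ Tk])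
    also have "\<dots> = (\<Prod>i=0..<k. T $$ (i, i))" unfolding prod_list_diag_prod Tk_def by simp
    also have "\<dots> = (\<Prod>i<k. es ! i)" unfolding dg[symmetric] diag_mat_def lessThan_atLeast0
      using T kn by (intro prod.cong) auto
    finally show ?thesis .
  qed
  define x where "x = (\<lambda>\<alpha>. if \<alpha> \<in> ksubsets n k then det (submatrix W \<alpha> UNIV) else 0)"
  have xc: "x \<in> cvecs n k" unfolding cvecs_def x_def by auto
  have xnz: "x \<noteq> (\<lambda>_. 0)"
  proof
    assume x0: "x = (\<lambda>_. 0)"
    define Q' where "Q' = transpose_mat E * Q"
    have Q': "Q' \<in> carrier_mat k n" unfolding Q'_def using E Q by simp
    have Et: "transpose_mat E \<in> carrier_mat k n" using E by simp
    have QPE: "Q * (P * E) = E"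
      unfolding assoc_mult_mat[symmetric, OF Q P E] QP by (rule left_mult_one_mat[OF E])
    have "Q' * W = transpose_mat E * (Q * (P * E))" unfolding Q'_def W_def
      by (rule assoc_mult_mat[OF Et Q], insert P E, auto)
    also have "\<dots> = transpose_mat E * E" unfolding QPE ..
    also have "\<dots> = 1\<^sub>m k"
    proof (rule eq_matI)
      fix i j assume "i < dim_row (1\<^sub>m k)" "j < dim_col (1\<^sub>m k)"
      hence ij: "i < k" "j < k" by auto
      have "(transpose_mat E * E) $$ (i, j) = (\<Sum>l<n. (if l = i then 1 else 0) * (if l = j then 1 else 0))"
        using E ij kn by (simp add: scalar_prod_def E_def lessThan_atLeast0)
      also have "\<dots> = (\<Sum>l<n. if l = i then (if i = j then 1 else 0) else 0)"
        by (rule sum.cong) auto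
      also have "\<dots> = (if i = j then 1 else 0)" using ij kn by simp
      finally show "(transpose_mat E * E) $$ (i, j) = 1\<^sub>m k $$ (i, j)" using ij by simp
    qed (insert E, auto)
    finally have "det (Q' * W) = 1" by simp
    moreover have "det (Q' * W) = (\<Sum>\<beta>\<in>ksubsets n k. det (submatrix Q' UNIV \<beta>) * det (submatrix W \<beta> UNIV))"
      by (rule cauchy_binet[OF Q' W])
    moreover have "det (submatrix W \<beta> UNIV) = 0" if b: "\<beta> \<in> ksubsets n k" for \<beta>
    proof -
      have "x \<beta> = 0" using x0 by simp
      thus ?thesis using b unfolding x_def by simp
    qed
    ultimately show False by simp
  qed
  have eig: "cmat_apply n k (compound k A) x = (\<lambda>\<alpha>. (\<Prod>i<k. es ! i) * x \<alpha>)"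
  proof
    fix \<alpha>
    show "cmat_apply n k (compound k A) x \<alpha> = (\<Prod>i<k. es ! i) * x \<alpha>"
    proof (cases "\<alpha> \<in> ksubsets n k")
      case False thus ?thesis unfolding cmat_apply_def x_def by simp
    next
      case a: True
      define X where "X = submatrix A \<alpha> UNIV"
      have X: "X \<in> carrier_mat k n" unfolding X_def by (rule submatrix_rows_carrier[OF A a])
      have "cmat_apply n k (compound k A) x \<alpha> = (\<Sum>\<beta>\<in>ksubsets n k. compound k A \<alpha> \<beta> * x \<beta>)"
        unfolding cmat_apply_def using a by simp
      also have "\<dots> = (\<Sum>\<beta>\<in>ksubsets n k. det (submatrix A \<alpha> \<beta>) * det (submatrix W \<beta> UNIV))"
        by (rule sum.cong[OF refl]) (insert a A, simp add: compound_def x_def)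
      also have "\<dots> = (\<Sum>\<beta>\<in>ksubsets n k. det (submatrix X UNIV \<beta>) * det (submatrix W \<beta> UNIV))"
        unfolding X_def by (rule sum.cong[OF refl]) (simp add: submatrix_sub_rows[OF A a])
      also have "\<dots> = det (X * W)" by (rule cauchy_binet[OF X W, symmetric])
      also have "X * W = submatrix W \<alpha> UNIV * Tk"
      proof -
        have "X * W = submatrix (A * W) \<alpha> UNIV" unfolding X_def by (rule submatrix_mult_rows[OF A W, symmetric])
        also have "\<dots> = submatrix W \<alpha> UNIV * Tk" unfolding AW by (rule submatrix_mult_rows[OF W Tk])
        finally show ?thesis .
      qed
      also have "det (submatrix W \<alpha> UNIV * Tk) = det (submatrix W \<alpha> UNIV) * det Tk"
        by (rule det_mult[OF submatrix_rows_carrier[OF W a] Tk])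
      also have "\<dots> = (\<Prod>i<k. es ! i) * x \<alpha>" unfolding x_def detTk using a by simp
      finally show ?thesis .
    qed
  qed
  show ?thesis using xc xnz eig by blast
qed

definition ee :: "nat set \<Rightarrow> nat set \<Rightarrow> complex" where "ee \<alpha> = (\<lambda>\<gamma>. if \<gamma> = \<alpha> then 1 else 0)"

lemma cvecsI: "(\<And>\<alpha>. \<alpha> \<notin> ksubsets n k \<Longrightarrow> x \<alpha> = 0) \<Longrightarrow> x \<in> cvecs n k"
  unfolding cvecs_def by auto

lemma cvecsD: "x \<in> cvecs n k \<Longrightarrow> \<alpha> \<notin> ksubsets n k \<Longrightarrow> x \<alpha> = 0"
  unfolding cvecs_def by auto

lemma ee_cvecs: "\<alpha> \<in> ksubsets n k \<Longrightarrow> ee \<alpha> \<in> cvecs n k"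
  unfolding ee_def cvecs_def by auto

lemma cmat_apply_cvecs: "cmat_apply n k M x \<in> cvecs n k"
  unfolding cmat_apply_def cvecs_def by auto

lemma cmat_apply_zero: "cmat_apply n k M (\<lambda>_. 0) = (\<lambda>_. 0)"
  unfolding cmat_apply_def by auto

lemma aux_lin1: "(a::complex) * u + b * (-u) = (a - b) * u" by (simp add: algebra_simps)
lemma aux_lin2: "(a::complex) * u + b * u = (a + b) * u" by (simp add: algebra_simps)

context
  fixes n k :: nat and \<eta> :: "(nat set \<Rightarrow> complex) \<Rightarrow> real"
  assumes eta: "abs_vec_norm_on n k \<eta>"
begin

lemma eta_D1: "x \<in> cvecs n k \<Longrightarrow> 0 \<le> \<eta> x \<and> (\<eta> x = 0 \<longleftrightarrow> x = (\<lambda>_. 0))"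
  by (rule bspec[OF conjunct1[OF eta[unfolded abs_vec_norm_on_def]]])

lemma eta_scale: "x \<in> cvecs n k \<Longrightarrow> \<eta> (\<lambda>\<alpha>. c * x \<alpha>) = cmod c * \<eta> x"
  by (rule spec[OF bspec[OF conjunct1[OF conjunct2[OF eta[unfolded abs_vec_norm_on_def]]]]])

lemma eta_tri: "x \<in> cvecs n k \<Longrightarrow> y \<in> cvecs n k \<Longrightarrow> \<eta> (\<lambda>\<alpha>. x \<alpha> + y \<alpha>) \<le> \<eta> x + \<eta> y"
  by (rule bspec[OF bspec[OF conjunct1[OF conjunct2[OF conjunct2[OF eta[unfolded abs_vec_norm_on_def]]]]]])

lemma eta_abs: "x \<in> cvecs n k \<Longrightarrow> y \<in> cvecs n k \<Longrightarrow> (\<And>\<alpha>. cmod (x \<alpha>) = cmod (y \<alpha>)) \<Longrightarrow> \<eta> x = \<eta> y"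
  using mp[OF bspec[OF bspec[OF conjunct2[OF conjunct2[OF conjunct2[OF eta[unfolded abs_vec_norm_on_def]]]]]]] by blast

lemma zero_cvecs: "(\<lambda>_. 0) \<in> cvecs n k"
  unfolding cvecs_def by simp

lemma eta_zero: "\<eta> (\<lambda>_. 0) = 0"
  using eta_D1[OF zero_cvecs] by simp

lemma eta_nonneg: "x \<in> cvecs n k \<Longrightarrow> 0 \<le> \<eta> x"
  using eta_D1 by simp

lemma eta_pos: "x \<in> cvecs n k \<Longrightarrow> x \<noteq> (\<lambda>_. 0) \<Longrightarrow> 0 < \<eta> x"
  using eta_D1[of x] by (simp add: less_le)

lemma eta_mono1:
  assumes w: "w \<in> cvecs n k" and c: "cmod c \<le> cmod (w \<beta>)"
  shows "\<eta> (w(\<beta> := c)) \<le> \<eta> w"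
proof (cases "w \<beta> = 0")
  case True
  hence "c = 0" using c by simp
  hence "w(\<beta> := c) = w" using True by auto
  thus ?thesis by simp
next
  case False
  define u where "u = w \<beta>"
  have bK: "\<beta> \<in> ksubsets n k" using False w cvecsD by blast
  have u0: "cmod u > 0" using False u_def by simp
  define s where "s = cmod c / cmod u"
  have s0: "0 \<le> s" and s1: "s \<le> 1" using c u0 unfolding s_def u_def by (auto simp: divide_le_eq_1)
  define z where "z = w(\<beta> := complex_of_real s * u)"
  define w' where "w' = w(\<beta> := - u)"
  have zc: "z \<in> cvecs n k" and w'c: "w' \<in> cvecs n k" and wbc: "w(\<beta> := c) \<in> cvecs n k"
    using w bK unfolding z_def w'_def by (auto intro!: cvecsI dest: cvecsD)
  have "\<eta> (w(\<beta> := c)) = \<eta> z"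
  proof (rule eta_abs[OF wbc zc])
    have "cmod (complex_of_real s * u) = s * cmod u" by (simp only: norm_mult norm_of_real abs_of_nonneg[OF s0])
    also have "\<dots> = cmod c" using u0 unfolding s_def by simp
    finally have h: "cmod (complex_of_real s * u) = cmod c" .
    fix \<alpha> show "cmod ((w(\<beta> := c)) \<alpha>) = cmod (z \<alpha>)"
      using h unfolding z_def by auto
  qed
  also have "z = (\<lambda>\<alpha>. (\<lambda>\<alpha>. complex_of_real ((1+s)/2) * w \<alpha>) \<alpha> + (\<lambda>\<alpha>. complex_of_real ((1-s)/2) * w' \<alpha>) \<alpha>)"
  proof
    fix \<alpha> show "z \<alpha> = complex_of_real ((1+s)/2) * w \<alpha> + complex_of_real ((1-s)/2) * w' \<alpha>"
    proof (cases "\<alpha> = \<beta>")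
      case True
      have h: "(1+s)/2 - (1-s)/2 = s" by (simp add: field_simps)
      have "complex_of_real ((1+s)/2) * u + complex_of_real ((1-s)/2) * (-u)
          = (complex_of_real ((1+s)/2) - complex_of_real ((1-s)/2)) * u" by (rule aux_lin1)
      also have "\<dots> = complex_of_real s * u" unfolding of_real_diff[symmetric] h ..
      finally show ?thesis using True unfolding z_def w'_def u_def by simp
    next
      case False
      have h: "(1+s)/2 + (1-s)/2 = 1" by (simp add: field_simps)
      have "complex_of_real ((1+s)/2) * w \<alpha> + complex_of_real ((1-s)/2) * w \<alpha>
          = (complex_of_real ((1+s)/2) + complex_of_real ((1-s)/2)) * w \<alpha>" by (rule aux_lin2)
      also have "\<dots> = w \<alpha>" unfolding of_real_add[symmetric] h by simp
      finally show ?thesis using False unfolding z_def w'_def by simp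
    qed
  qed
  also have "\<eta> \<dots> \<le> \<eta> (\<lambda>\<alpha>. complex_of_real ((1+s)/2) * w \<alpha>) + \<eta> (\<lambda>\<alpha>. complex_of_real ((1-s)/2) * w' \<alpha>)"
    by (rule eta_tri) (use w w'c in \<open>auto intro!: cvecsI dest: cvecsD\<close>)
  also have "\<dots> = (1+s)/2 * \<eta> w + (1-s)/2 * \<eta> w'"
    unfolding eta_scale[OF w] eta_scale[OF w'c] norm_of_real using s0 s1 by simp
  also have "\<eta> w' = \<eta> w" by (rule eta_abs[OF w'c w]) (auto simp: w'_def u_def)
  also have "(1+s)/2 * \<eta> w + (1-s)/2 * \<eta> w = \<eta> w" by (simp add: field_simps)
  finally show ?thesis by (simp add: fun_upd_def)
qed

lemma eta_mono_aux:
  assumes "finite S"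
  shows "\<forall>x y. x \<in> cvecs n k \<longrightarrow> y \<in> cvecs n k \<longrightarrow> (\<forall>\<alpha>. cmod (x \<alpha>) \<le> cmod (y \<alpha>)) \<longrightarrow>
           (\<forall>\<alpha>. \<alpha> \<notin> S \<longrightarrow> x \<alpha> = y \<alpha>) \<longrightarrow> \<eta> x \<le> \<eta> y"
  using assms
proof (induction S rule: finite_induct)
  case empty
  show ?case
  proof (intro allI impI)
    fix x y :: "nat set \<Rightarrow> complex" assume "\<forall>\<alpha>. \<alpha> \<notin> {} \<longrightarrow> x \<alpha> = y \<alpha>"
    hence "x = y" by auto
    thus "\<eta> x \<le> \<eta> y" by simp
  qed
next
  case (insert \<beta> S)
  show ?case
  proof (intro allI impI)
    fix x y assume x: "x \<in> cvecs n k" and y: "y \<in> cvecs n k" and le: "\<forall>\<alpha>. cmod (x \<alpha>) \<le> cmod (y \<alpha>)"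
      and eq: "\<forall>\<alpha>. \<alpha> \<notin> insert \<beta> S \<longrightarrow> x \<alpha> = y \<alpha>"
    define z where "z = x(\<beta> := y \<beta>)"
    have z: "z \<in> cvecs n k" using x y unfolding z_def by (auto intro!: cvecsI dest: cvecsD)
    have "\<eta> z \<le> \<eta> y" using insert.IH z y le eq unfolding z_def by auto
    moreover have "x = z(\<beta> := x \<beta>)" unfolding z_def by auto
    moreover have "\<eta> (z(\<beta> := x \<beta>)) \<le> \<eta> z" by (rule eta_mono1[OF z]) (use le in \<open>auto simp: z_def\<close>)
    ultimately show "\<eta> x \<le> \<eta> y" by simp
  qed
qed

lemma eta_mono:
  assumes x: "x \<in> cvecs n k" and y: "y \<in> cvecs n k" and le: "\<And>\<alpha>. cmod (x \<alpha>) \<le> cmod (y \<alpha>)"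
  shows "\<eta> x \<le> \<eta> y"
  using eta_mono_aux[OF finite_ksubsets[of n k]] x y le cvecsD[OF x] cvecsD[OF y] by metis

lemma eta_upper_aux:
  assumes x: "x \<in> cvecs n k" and S: "S \<subseteq> ksubsets n k"
  shows "\<eta> (\<lambda>\<gamma>. if \<gamma> \<in> S then x \<gamma> else 0) \<le> (\<Sum>\<alpha>\<in>S. cmod (x \<alpha>) * \<eta> (ee \<alpha>))"
proof -
  have "finite S" using S finite_ksubsets finite_subset by blast
  thus ?thesis using S
  proof (induction S rule: finite_induct)
    case empty thus ?case using eta_zero by simp
  next
    case (insert \<beta> S)
    have bK: "\<beta> \<in> ksubsets n k" using insert by auto
    have v1: "(\<lambda>\<gamma>. if \<gamma> \<in> S then x \<gamma> else 0) \<in> cvecs n k" using insert x by (auto intro!: cvecsI)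
    have v2: "(\<lambda>\<gamma>. x \<beta> * ee \<beta> \<gamma>) \<in> cvecs n k" using bK by (auto intro!: cvecsI simp: ee_def)
    have "(\<lambda>\<gamma>. if \<gamma> \<in> insert \<beta> S then x \<gamma> else 0) =
        (\<lambda>\<gamma>. (\<lambda>\<gamma>. if \<gamma> \<in> S then x \<gamma> else 0) \<gamma> + (\<lambda>\<gamma>. x \<beta> * ee \<beta> \<gamma>) \<gamma>)"
      using insert.hyps(2) by (auto simp: ee_def)
    hence "\<eta> (\<lambda>\<gamma>. if \<gamma> \<in> insert \<beta> S then x \<gamma> else 0) \<le>
        \<eta> (\<lambda>\<gamma>. if \<gamma> \<in> S then x \<gamma> else 0) + \<eta> (\<lambda>\<gamma>. x \<beta> * ee \<beta> \<gamma>)"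
      using eta_tri[OF v1 v2] by simp
    also have "\<eta> (\<lambda>\<gamma>. x \<beta> * ee \<beta> \<gamma>) = cmod (x \<beta>) * \<eta> (ee \<beta>)"
      by (rule eta_scale[OF ee_cvecs[OF bK]])
    also have "\<eta> (\<lambda>\<gamma>. if \<gamma> \<in> S then x \<gamma> else 0) \<le> (\<Sum>\<alpha>\<in>S. cmod (x \<alpha>) * \<eta> (ee \<alpha>))"
      using insert by auto
    finally show ?case using insert.hyps by simp
  qed
qed

lemma eta_upper:
  assumes x: "x \<in> cvecs n k"
  shows "\<eta> x \<le> (\<Sum>\<alpha>\<in>ksubsets n k. cmod (x \<alpha>) * \<eta> (ee \<alpha>))"
proof -
  have "(\<lambda>\<gamma>. if \<gamma> \<in> ksubsets n k then x \<gamma> else 0) = x" using cvecsD[OF x] by auto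
  thus ?thesis using eta_upper_aux[OF x order_refl] by simp
qed

lemma ee_pos: "\<alpha> \<in> ksubsets n k \<Longrightarrow> 0 < \<eta> (ee \<alpha>)"
  by (rule eta_pos[OF ee_cvecs]) (auto simp: ee_def fun_eq_iff)

lemma eta_lower:
  assumes x: "x \<in> cvecs n k" and a: "\<alpha> \<in> ksubsets n k"
  shows "cmod (x \<alpha>) * \<eta> (ee \<alpha>) \<le> \<eta> x"
proof -
  have "cmod (x \<alpha>) * \<eta> (ee \<alpha>) = \<eta> (\<lambda>\<gamma>. x \<alpha> * ee \<alpha> \<gamma>)" by (rule eta_scale[OF ee_cvecs[OF a], symmetric])
  also have "\<dots> \<le> \<eta> x"
    by (rule eta_mono) (use a x in \<open>auto intro!: cvecsI simp: ee_def\<close>)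
  finally show ?thesis .
qed

definition C0 where "C0 = (\<Sum>\<alpha>\<in>ksubsets n k. \<Sum>\<beta>\<in>ksubsets n k. \<eta> (ee \<alpha>) / \<eta> (ee \<beta>))"

lemma ratio_bound:
  assumes R: "\<And>\<alpha> \<beta>. cmod (M \<alpha> \<beta>) \<le> R" and x: "x \<in> cvecs n k" and x0: "x \<noteq> (\<lambda>_. 0)"
  shows "\<eta> (cmat_apply n k M x) / \<eta> x \<le> R * C0"
proof -
  have ex: "0 < \<eta> x" by (rule eta_pos[OF x x0])
  have xb: "cmod (x \<beta>) \<le> \<eta> x / \<eta> (ee \<beta>)" if "\<beta> \<in> ksubsets n k" for \<beta>
    using eta_lower[OF x that] ee_pos[OF that] by (simp add: field_simps)
  have "\<eta> (cmat_apply n k M x) \<le> (\<Sum>\<alpha>\<in>ksubsets n k. cmod (cmat_apply n k M x \<alpha>) * \<eta> (ee \<alpha>))"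
    by (rule eta_upper[OF cmat_apply_cvecs])
  also have "\<dots> \<le> (\<Sum>\<alpha>\<in>ksubsets n k. (\<Sum>\<beta>\<in>ksubsets n k. R * (\<eta> x / \<eta> (ee \<beta>))) * \<eta> (ee \<alpha>))"
  proof (rule sum_mono)
    fix \<alpha> assume a: "\<alpha> \<in> ksubsets n k"
    have "cmod (cmat_apply n k M x \<alpha>) = cmod (\<Sum>\<beta>\<in>ksubsets n k. M \<alpha> \<beta> * x \<beta>)"
      unfolding cmat_apply_def using a by simp
    also have "\<dots> \<le> (\<Sum>\<beta>\<in>ksubsets n k. cmod (M \<alpha> \<beta> * x \<beta>))" by (rule norm_sum)
    also have "\<dots> \<le> (\<Sum>\<beta>\<in>ksubsets n k. R * (\<eta> x / \<eta> (ee \<beta>)))"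
    proof (rule sum_mono)
      fix \<beta> assume b: "\<beta> \<in> ksubsets n k"
      show "cmod (M \<alpha> \<beta> * x \<beta>) \<le> R * (\<eta> x / \<eta> (ee \<beta>))"
        unfolding norm_mult by (rule mult_mono[OF R xb[OF b]]) (use order_trans[OF norm_ge_zero R[of \<alpha> \<beta>]] in auto)
    qed
    finally show "cmod (cmat_apply n k M x \<alpha>) * \<eta> (ee \<alpha>) \<le> (\<Sum>\<beta>\<in>ksubsets n k. R * (\<eta> x / \<eta> (ee \<beta>))) * \<eta> (ee \<alpha>)"
      using ee_pos[OF a] by (simp add: mult_right_mono)
  qed
  also have "\<dots> = R * C0 * \<eta> x"
    unfolding C0_def sum_distrib_left sum_distrib_right by (rule sum.cong[OF refl], rule sum.cong[OF refl]) simp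
  finally show ?thesis using ex by (simp add: field_simps)
qed

lemma op_norm_ge:
  assumes R: "\<And>\<alpha> \<beta>. cmod (M \<alpha> \<beta>) \<le> R" and x: "x \<in> cvecs n k" and x0: "x \<noteq> (\<lambda>_. 0)"
  shows "\<eta> (cmat_apply n k M x) / \<eta> x \<le> op_norm n k \<eta> M"
proof -
  have rb: "\<eta> (cmat_apply n k M y) / \<eta> y \<le> R * C0" if "y \<in> cvecs n k - {\<lambda>_. 0}" for y
    using ratio_bound[of M R y] R that by blast
  have "bdd_above ((\<lambda>y. \<eta> (cmat_apply n k M y) / \<eta> y) ` (cvecs n k - {\<lambda>_. 0}))"
    by (rule bdd_aboveI2[where M="R * C0"]) (rule rb)
  thus ?thesis unfolding op_norm_def by (rule cSUP_upper[rotated]) (use x x0 in auto)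
qed

lemma op_norm_apply:
  assumes R: "\<And>\<alpha> \<beta>. cmod (M \<alpha> \<beta>) \<le> R" and x: "x \<in> cvecs n k"
  shows "\<eta> (cmat_apply n k M x) \<le> op_norm n k \<eta> M * \<eta> x"
proof (cases "x = (\<lambda>_. 0)")
  case True thus ?thesis using eta_zero cmat_apply_zero by simp
next
  case False
  have "0 < \<eta> x" by (rule eta_pos[OF x False])
  thus ?thesis using op_norm_ge[OF R x False] by (simp add: field_simps)
qed

lemma op_norm_bound:
  assumes R: "\<And>\<alpha> \<beta>. cmod (M \<alpha> \<beta>) \<le> R" and k: "k \<le> n"
  shows "op_norm n k \<eta> M \<le> R * C0"
proof -
  obtain \<alpha> where a: "\<alpha> \<in> ksubsets n k"
  proof -
    have "{0..<k} \<in> ksubsets n k" using k unfolding ksubsets_def by auto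
    thus ?thesis using that by blast
  qed
  have "ee \<alpha> \<noteq> (\<lambda>_. 0)" unfolding ee_def by (metis zero_neq_one)
  hence ne: "cvecs n k - {\<lambda>_. 0} \<noteq> {}" using ee_cvecs[OF a] by blast
  show ?thesis unfolding op_norm_def
  proof (rule cSUP_least[OF ne])
    fix y assume "y \<in> cvecs n k - {\<lambda>_. 0}"
    thus "\<eta> (cmat_apply n k M y) / \<eta> y \<le> R * C0" using ratio_bound[of M R y] R by blast
  qed
qed

end

lemma real_bw:
  fixes s :: "nat \<Rightarrow> real"
  assumes "\<And>m. \<bar>s m\<bar> \<le> B"
  shows "\<exists>r l. strict_mono r \<and> (\<lambda>m. s (r m)) \<longlonglongrightarrow> l"
proof -
  obtain f where f: "strict_mono f" "monoseq (\<lambda>n. s (f n))" using seq_monosub by blast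
  have "Bseq (\<lambda>n. s (f n))" by (rule BseqI'[where K=B]) (use assms in auto)
  hence "convergent (\<lambda>n. s (f n))" using Bseq_monoseq_convergent f(2) by blast
  then obtain l where "(\<lambda>n. s (f n)) \<longlonglongrightarrow> l" using convergentD by blast
  thus ?thesis using f(1) by blast
qed

lemma complex_bw:
  fixes s :: "nat \<Rightarrow> complex"
  assumes B: "\<And>m. cmod (s m) \<le> B"
  shows "\<exists>r l. strict_mono r \<and> (\<lambda>m. s (r m)) \<longlonglongrightarrow> l"
proof -
  have B1: "\<bar>Re (s m)\<bar> \<le> B" for m using abs_Re_le_cmod[of "s m"] B[of m] by linarith
  obtain r1 a where r1: "strict_mono r1" and a: "(\<lambda>m. Re (s (r1 m))) \<longlonglongrightarrow> a"
    using real_bw[of "\<lambda>m. Re (s m)" B, OF B1] by blast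
  have B2: "\<bar>Im (s (r1 m))\<bar> \<le> B" for m using abs_Im_le_cmod[of "s (r1 m)"] B[of "r1 m"] by linarith
  obtain r2 b where r2: "strict_mono r2" and b: "(\<lambda>m. Im (s (r1 (r2 m)))) \<longlonglongrightarrow> b"
    using real_bw[of "\<lambda>m. Im (s (r1 m))" B, OF B2] by blast
  have a2: "(\<lambda>m. Re (s (r1 (r2 m)))) \<longlonglongrightarrow> a"
    using LIMSEQ_subseq_LIMSEQ[OF a r2] by (simp add: o_def)
  have "(\<lambda>m. Complex (Re (s (r1 (r2 m)))) (Im (s (r1 (r2 m))))) \<longlonglongrightarrow> Complex a b"
    by (rule tendsto_Complex[OF a2 b])
  hence "(\<lambda>m. s ((r1 \<circ> r2) m)) \<longlonglongrightarrow> Complex a b" by simp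
  moreover have "strict_mono (r1 \<circ> r2)" by (rule strict_mono_o[OF r1 r2])
  ultimately show ?thesis by blast
qed

lemma multi_bw:
  fixes f :: "nat \<Rightarrow> nat \<Rightarrow> complex"
  assumes B: "\<And>m i. i < N \<Longrightarrow> cmod (f m i) \<le> B"
  shows "\<exists>r l. strict_mono r \<and> (\<forall>i<N. (\<lambda>m. f (r m) i) \<longlonglongrightarrow> l i)"
  using B
proof (induction N)
  case 0
  have "strict_mono (\<lambda>m::nat. m)" by (simp add: strict_mono_def)
  thus ?case by blast
next
  case (Suc N)
  then obtain r l where r: "strict_mono r" and l: "\<forall>i<N. (\<lambda>m. f (r m) i) \<longlonglongrightarrow> l i" by force
  obtain r2 a where r2: "strict_mono r2" and a: "(\<lambda>m. f (r (r2 m)) N) \<longlonglongrightarrow> a"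
    using complex_bw[of "\<lambda>m. f (r m) N" B] Suc.prems by blast
  have "\<forall>i<Suc N. (\<lambda>m. f ((r \<circ> r2) m) i) \<longlonglongrightarrow> (l(N := a)) i"
  proof (intro allI impI)
    fix i assume i: "i < Suc N"
    show "(\<lambda>m. f ((r \<circ> r2) m) i) \<longlonglongrightarrow> (l(N := a)) i"
    proof (cases "i = N")
      case True thus ?thesis using a by simp
    next
      case False
      hence "i < N" using i by simp
      hence "(\<lambda>m. f (r m) i) \<longlonglongrightarrow> l i" using l by blast
      from LIMSEQ_subseq_LIMSEQ[OF this r2] show ?thesis using False by (simp add: o_def)
    qed
  qed
  moreover have "strict_mono (r \<circ> r2)" by (rule strict_mono_o[OF r r2])
  ultimately show ?case by blast
qed

context
  fixes n :: nat and \<nu> :: "complex vec \<Rightarrow> real"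
  assumes nu: "vec_norm_on n \<nu>"
begin

lemma nu_D1: "x \<in> carrier_vec n \<Longrightarrow> 0 \<le> \<nu> x \<and> (\<nu> x = 0 \<longleftrightarrow> x = 0\<^sub>v n)"
  by (rule bspec[OF conjunct1[OF nu[unfolded vec_norm_on_def]]])

lemma nu_scale: "x \<in> carrier_vec n \<Longrightarrow> \<nu> (c \<cdot>\<^sub>v x) = cmod c * \<nu> x"
  by (rule spec[OF bspec[OF conjunct1[OF conjunct2[OF nu[unfolded vec_norm_on_def]]]]])

lemma nu_tri: "x \<in> carrier_vec n \<Longrightarrow> y \<in> carrier_vec n \<Longrightarrow> \<nu> (x + y) \<le> \<nu> x + \<nu> y"
  by (rule bspec[OF bspec[OF conjunct2[OF conjunct2[OF nu[unfolded vec_norm_on_def]]]]])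

lemma nu_zero: "\<nu> (0\<^sub>v n) = 0"
  using nu_D1[of "0\<^sub>v n"] by simp

lemma nu_nonneg: "x \<in> carrier_vec n \<Longrightarrow> 0 \<le> \<nu> x"
  using nu_D1 by blast

definition Cn where "Cn = (\<Sum>i<n. \<nu> (unit_vec n i))"

lemma nu_upper_aux:
  assumes v: "v \<in> carrier_vec n"
  shows "j \<le> n \<Longrightarrow> \<nu> (vec n (\<lambda>i. if i < j then v $ i else 0)) \<le> (\<Sum>i<j. cmod (v $ i) * \<nu> (unit_vec n i))"
proof (induction j)
  case 0
  have "vec n (\<lambda>i. if i < 0 then v $ i else 0) = 0\<^sub>v n" by (rule eq_vecI) auto
  thus ?case using nu_zero by simp
next
  case (Suc j)
  have j: "j < n" using Suc.prems by simp
  have "vec n (\<lambda>i. if i < Suc j then v $ i else 0) = vec n (\<lambda>i. if i < j then v $ i else 0) + (v $ j) \<cdot>\<^sub>v unit_vec n j"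
    by (rule eq_vecI) (use j in \<open>auto simp: less_Suc_eq\<close>)
  hence "\<nu> (vec n (\<lambda>i. if i < Suc j then v $ i else 0)) \<le> \<nu> (vec n (\<lambda>i. if i < j then v $ i else 0)) + \<nu> ((v $ j) \<cdot>\<^sub>v unit_vec n j)"
    using nu_tri[of "vec n (\<lambda>i. if i < j then v $ i else 0)" "(v $ j) \<cdot>\<^sub>v unit_vec n j"] by simp
  also have "\<nu> ((v $ j) \<cdot>\<^sub>v unit_vec n j) = cmod (v $ j) * \<nu> (unit_vec n j)" by (rule nu_scale) simp
  finally show ?case using Suc.IH j by simp
qed

lemma nu_upper:
  assumes v: "v \<in> carrier_vec n"
  shows "\<nu> v \<le> Cn * (\<Sum>i<n. cmod (v $ i))"
proof -
  have "vec n (\<lambda>i. if i < n then v $ i else 0) = v" by (rule eq_vecI) (use v in auto)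
  hence "\<nu> v \<le> (\<Sum>i<n. cmod (v $ i) * \<nu> (unit_vec n i))" using nu_upper_aux[OF v, of n] by simp
  also have "\<dots> \<le> (\<Sum>i<n. cmod (v $ i) * Cn)"
  proof (rule sum_mono)
    fix i assume i: "i \<in> {..<n}"
    have "\<nu> (unit_vec n i) \<le> Cn" unfolding Cn_def
      by (rule member_le_sum) (use i nu_nonneg in auto)
    thus "cmod (v $ i) * \<nu> (unit_vec n i) \<le> cmod (v $ i) * Cn" by (simp add: mult_left_mono)
  qed
  also have "\<dots> = Cn * (\<Sum>i<n. cmod (v $ i))" by (simp add: sum_distrib_left mult.commute)
  finally show ?thesis .
qed

lemma nu_lip:
  assumes v: "v \<in> carrier_vec n" and w: "w \<in> carrier_vec n"
  shows "\<nu> v \<le> \<nu> w + Cn * (\<Sum>i<n. cmod (v $ i - w $ i))"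
proof -
  have "v = w + (v - w)" by (rule eq_vecI) (use v w in auto)
  hence "\<nu> v \<le> \<nu> w + \<nu> (v - w)" using nu_tri[of w "v - w"] v w by simp
  also have "\<nu> (v - w) \<le> Cn * (\<Sum>i<n. cmod ((v - w) $ i))" by (rule nu_upper) (use v w in auto)
  also have "(\<Sum>i<n. cmod ((v - w) $ i)) = (\<Sum>i<n. cmod (v $ i - w $ i))" using v w by (intro sum.cong) auto
  finally show ?thesis by simp
qed

lemma nu_lower: "\<exists>c>0. \<forall>v\<in>carrier_vec n. (\<Sum>i<n. cmod (v $ i)) = 1 \<longrightarrow> c \<le> \<nu> v"
proof (rule ccontr)
  assume "\<not> ?thesis"
  note nc = this
  have "\<forall>m::nat. \<exists>v. v \<in> carrier_vec n \<and> (\<Sum>i<n. cmod (v $ i)) = 1 \<and> \<nu> v < inverse (real (Suc m))"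
  proof
    fix m :: nat
    have pos: "inverse (real (Suc m)) > 0" by simp
    have "\<not> (\<forall>v\<in>carrier_vec n. (\<Sum>i<n. cmod (v $ i)) = 1 \<longrightarrow> inverse (real (Suc m)) \<le> \<nu> v)"
      using nc pos by blast
    thus "\<exists>v. v \<in> carrier_vec n \<and> (\<Sum>i<n. cmod (v $ i)) = 1 \<and> \<nu> v < inverse (real (Suc m))"
      by (auto simp: not_le)
  qed
  from choice[OF this] obtain V where VV: "\<forall>m. V m \<in> carrier_vec n \<and> (\<Sum>i<n. cmod (V m $ i)) = 1 \<and> \<nu> (V m) < inverse (real (Suc m))"
    by blast
  have V: "\<And>m. V m \<in> carrier_vec n" and V1: "\<And>m. (\<Sum>i<n. cmod (V m $ i)) = 1"
    and Vs: "\<And>m. \<nu> (V m) < inverse (real (Suc m))" using VV by auto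
  have Vb: "cmod (V m $ i) \<le> 1" if "i < n" for m i
    using member_le_sum[of i "{..<n}" "\<lambda>i. cmod (V m $ i)"] V1[of m] that by simp
  obtain r l where r: "strict_mono r" and l: "\<forall>i<n. (\<lambda>m. V (r m) $ i) \<longlonglongrightarrow> l i"
    using multi_bw[of n "\<lambda>m i. V m $ i" 1] Vb by blast
  define y where "y = vec n l"
  have y: "y \<in> carrier_vec n" unfolding y_def by simp
  have "(\<lambda>m. \<Sum>i<n. cmod (V (r m) $ i)) \<longlonglongrightarrow> (\<Sum>i<n. cmod (l i))"
    by (rule tendsto_sum, rule tendsto_norm) (use l in auto)
  moreover have "(\<lambda>m. \<Sum>i<n. cmod (V (r m) $ i)) = (\<lambda>m. 1)" using V1 by simp
  ultimately have "(\<lambda>m. 1::real) \<longlonglongrightarrow> (\<Sum>i<n. cmod (l i))" by simp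
  hence y1: "(\<Sum>i<n. cmod (l i)) = 1" using LIMSEQ_unique[OF tendsto_const] by metis
  have lim0: "(\<lambda>m. inverse (real (Suc (r m))) + Cn * (\<Sum>i<n. cmod (l i - V (r m) $ i))) \<longlonglongrightarrow> 0 + Cn * (\<Sum>i<n. cmod (l i - l i))"
  proof (intro tendsto_add tendsto_mult tendsto_const tendsto_sum tendsto_norm tendsto_diff)
    show "(\<lambda>m. inverse (real (Suc (r m)))) \<longlonglongrightarrow> 0"
      using LIMSEQ_subseq_LIMSEQ[OF LIMSEQ_inverse_real_of_nat r] by (simp add: o_def)
    fix i assume "i \<in> {..<n}" thus "(\<lambda>m. V (r m) $ i) \<longlonglongrightarrow> l i" using l by auto
  qed
  have lim0': "(\<lambda>m. inverse (real (Suc (r m))) + Cn * (\<Sum>i<n. cmod (l i - V (r m) $ i))) \<longlonglongrightarrow> 0"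
    using lim0 by simp
  have bnd: "\<nu> y \<le> inverse (real (Suc (r m))) + Cn * (\<Sum>i<n. cmod (l i - V (r m) $ i))" for m
  proof -
    have "\<nu> y \<le> \<nu> (V (r m)) + Cn * (\<Sum>i<n. cmod (y $ i - V (r m) $ i))" by (rule nu_lip[OF y V])
    also have "(\<Sum>i<n. cmod (y $ i - V (r m) $ i)) = (\<Sum>i<n. cmod (l i - V (r m) $ i))"
      unfolding y_def by (intro sum.cong) auto
    finally show ?thesis using Vs[of "r m"] by simp
  qed
  have "\<nu> y \<le> 0"
    by (rule LIMSEQ_le_const[OF lim0']) (intro exI[of _ 0] allI impI bnd)
  hence "y = 0\<^sub>v n" using nu_D1[OF y] by linarith
  have "l i = 0" if i: "i < n" for i
  proof -
    have "y $ i = 0\<^sub>v n $ i" using \<open>y = 0\<^sub>v n\<close> by simp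
    thus ?thesis using i unfolding y_def by simp
  qed
  hence "(\<Sum>i<n. cmod (l i)) = 0" by simp
  thus False using y1 by simp
qed

lemma nu_equiv: "\<exists>K\<ge>0. \<forall>v\<in>carrier_vec n. \<forall>i<n. cmod (v $ i) \<le> K * \<nu> v"
proof -
  obtain c where c: "c > 0" and cl: "\<And>v. v \<in> carrier_vec n \<Longrightarrow> (\<Sum>i<n. cmod (v $ i)) = 1 \<Longrightarrow> c \<le> \<nu> v"
    using nu_lower by blast
  have "\<forall>v\<in>carrier_vec n. \<forall>i<n. cmod (v $ i) \<le> inverse c * \<nu> v"
  proof (intro ballI allI impI)
    fix v :: "complex vec" and i :: nat assume v: "v \<in> carrier_vec n" and i: "i < n"
    define s where "s = (\<Sum>i<n. cmod (v $ i))"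
    have vi: "cmod (v $ i) \<le> s" unfolding s_def by (rule member_le_sum) (use i in auto)
    show "cmod (v $ i) \<le> inverse c * \<nu> v"
    proof (cases "s = 0")
      case True
      thus ?thesis using vi nu_nonneg[OF v] c by (simp add: zero_le_mult_iff)
    next
      case False
      have "s \<ge> 0" unfolding s_def by (rule sum_nonneg) simp
      hence s0: "s > 0" using False by linarith
      define w where "w = complex_of_real (inverse s) \<cdot>\<^sub>v v"
      have w: "w \<in> carrier_vec n" unfolding w_def using v by simp
      have cs: "cmod (complex_of_real (inverse s)) = inverse s" "cmod (inverse (complex_of_real s)) = inverse s"
        using s0 by (simp_all add: norm_inverse)
      have "(\<Sum>i<n. cmod (w $ i)) = (\<Sum>i<n. inverse s * cmod (v $ i))"
        unfolding w_def using v s0 by (intro sum.cong) (auto simp: norm_mult cs)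
      also have "\<dots> = 1" using s0 unfolding sum_distrib_left[symmetric] s_def[symmetric] by simp
      finally have "c \<le> \<nu> w" using cl[OF w] by simp
      also have "\<nu> w = inverse s * \<nu> v" unfolding w_def nu_scale[OF v] cs(1) ..
      finally have "c * s \<le> \<nu> v" using s0 by (simp add: field_simps)
      hence "s \<le> inverse c * \<nu> v" using c by (simp add: field_simps)
      thus ?thesis using vi by simp
    qed
  qed
  moreover have "inverse c \<ge> 0" using c by simp
  ultimately show ?thesis by blast
qed

end

lemma det_bound:
  fixes M :: "complex mat"
  assumes M: "M \<in> carrier_mat k k" and Mb: "\<And>i j. i < k \<Longrightarrow> j < k \<Longrightarrow> cmod (M $$ (i,j)) \<le> K" and K0: "0 \<le> K"
  shows "cmod (det M) \<le> fact k * K ^ k"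
proof -
  have "cmod (det M) = cmod (\<Sum>p\<in>{p. p permutes {0..<k}}. signof p * (\<Prod>i=0..<k. M $$ (i, p i)))"
    unfolding det_def'[OF M] ..
  also have "\<dots> \<le> (\<Sum>p\<in>{p. p permutes {0..<k}}. cmod (signof p * (\<Prod>i=0..<k. M $$ (i, p i))))"
    by (rule norm_sum)
  also have "\<dots> \<le> (\<Sum>p\<in>{p. p permutes {0..<k}}. K ^ k)"
  proof (rule sum_mono)
    fix p assume p: "p \<in> {p. p permutes {0..<k}}"
    hence pk: "\<And>i. i < k \<Longrightarrow> p i < k" using permutes_in_image[of p "{0..<k}"] by auto
    have s: "cmod (signof p :: complex) = 1" by (simp add: sign_def)
    have "cmod (signof p * (\<Prod>i=0..<k. M $$ (i, p i))) = (\<Prod>i=0..<k. cmod (M $$ (i, p i)))"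
      unfolding norm_mult s prod_norm by simp
    also have "\<dots> \<le> (\<Prod>i=0..<k. K)"
      by (rule prod_mono) (use pk Mb in auto)
    finally show "cmod (signof p * (\<Prod>i=0..<k. M $$ (i, p i))) \<le> K ^ k" by simp
  qed
  also have "\<dots> = fact k * K ^ k"
    using card_permutations[of "{0..<k}" k] by simp
  finally show ?thesis .
qed

lemma compound_bound:
  fixes B :: "complex mat"
  assumes B: "B \<in> carrier_mat n n" and Kb: "\<And>i j. i < n \<Longrightarrow> j < n \<Longrightarrow> cmod (B $$ (i,j)) \<le> K" and K0: "0 \<le> K"
  shows "cmod (compound k B \<alpha> \<beta>) \<le> fact k * K ^ k"
proof (cases "\<alpha> \<in> ksubsets n k \<and> \<beta> \<in> ksubsets n k")
  case False
  hence "compound k B \<alpha> \<beta> = 0" unfolding compound_def using B by auto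
  thus ?thesis using K0 by simp
next
  case True
  hence a: "\<alpha> \<in> ksubsets n k" and b: "\<beta> \<in> ksubsets n k" by auto
  have eq: "compound k B \<alpha> \<beta> = det (submatrix B \<alpha> \<beta>)" unfolding compound_def using B a b by simp
  have ca: "card {i. i < n \<and> i \<in> \<alpha>} = k" and cb: "card {i. i < n \<and> i \<in> \<beta>} = k" using card_ksub a b by auto
  have a2: "card \<alpha> = k" "\<alpha> \<subseteq> {0..<n}" and b2: "card \<beta> = k" "\<beta> \<subseteq> {0..<n}" using ksub_finite a b by auto
  show ?thesis unfolding eq
  proof (rule det_bound[OF submatrix_carrier_ks[OF B a b] _ K0])
    fix i j assume i: "i < k" and j: "j < k"
    have pi: "pick \<alpha> i < n" using pick_in_set_le[of i \<alpha>] a2 i by auto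
    have pj: "pick \<beta> j < n" using pick_in_set_le[of j \<beta>] b2 j by auto
    have "submatrix B \<alpha> \<beta> $$ (i, j) = B $$ (pick \<alpha> i, pick \<beta> j)"
      by (rule submatrix_index) (use B ca cb i j in auto)
    thus "cmod (submatrix B \<alpha> \<beta> $$ (i, j)) \<le> K" using Kb[OF pi pj] by simp
  qed
qed

lemma det_colscale:
  fixes A B :: "complex mat"
  assumes A: "A \<in> carrier_mat n n" and B: "B \<in> carrier_mat n n"
    and AB: "\<And>i j. i < n \<Longrightarrow> j < n \<Longrightarrow> A $$ (i,j) = B $$ (i,j) * c j"
    and a: "\<alpha> \<in> ksubsets n k" and b: "\<beta> \<in> ksubsets n k"
  shows "det (submatrix A \<alpha> \<beta>) = det (submatrix B \<alpha> \<beta>) * (\<Prod>j\<in>\<beta>. c j)"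
proof -
  have SA: "submatrix A \<alpha> \<beta> \<in> carrier_mat k k" by (rule submatrix_carrier_ks[OF A a b])
  have SB: "submatrix B \<alpha> \<beta> \<in> carrier_mat k k" by (rule submatrix_carrier_ks[OF B a b])
  have ca: "card {i. i < n \<and> i \<in> \<alpha>} = k" and cb: "card {i. i < n \<and> i \<in> \<beta>} = k" using card_ksub a b by auto
  have a2: "card \<alpha> = k" "\<alpha> \<subseteq> {0..<n}" and b2: "finite \<beta>" "card \<beta> = k" "\<beta> \<subseteq> {0..<n}" using ksub_finite a b by auto
  have ent: "submatrix A \<alpha> \<beta> $$ (i,j) = submatrix B \<alpha> \<beta> $$ (i,j) * c (pick \<beta> j)" if i: "i < k" and j: "j < k" for i j
  proof -
    have pi: "pick \<alpha> i < n" using pick_in_set_le[of i \<alpha>] a2 i by auto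
    have pj: "pick \<beta> j < n" using pick_in_set_le[of j \<beta>] b2 j by auto
    have "submatrix A \<alpha> \<beta> $$ (i, j) = A $$ (pick \<alpha> i, pick \<beta> j)"
      by (rule submatrix_index) (use A ca cb i j in auto)
    moreover have "submatrix B \<alpha> \<beta> $$ (i, j) = B $$ (pick \<alpha> i, pick \<beta> j)"
      by (rule submatrix_index) (use B ca cb i j in auto)
    ultimately show ?thesis using AB[OF pi pj] by simp
  qed
  have pc: "(\<Prod>j\<in>\<beta>. c j) = (\<Prod>j\<in>{0..<k}. c (pick \<beta> j))"
  proof -
    have inj: "inj_on (pick \<beta>) {0..<k}" by (rule inj_onI) (use pick_inj b2 in auto)
    have "(\<Prod>j\<in>{0..<k}. c (pick \<beta> j)) = prod c (pick \<beta> ` {0..<k})"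
      using prod.reindex[OF inj, of c] by (simp add: o_def)
    also have "pick \<beta> ` {0..<k} = \<beta>" using pick_image[OF b2(1)] b2(2) by simp
    finally show ?thesis by simp
  qed
  have "det (submatrix A \<alpha> \<beta>) = (\<Sum>p\<in>{p. p permutes {0..<k}}. signof p * (\<Prod>i=0..<k. submatrix A \<alpha> \<beta> $$ (i, p i)))"
    by (rule det_def'[OF SA])
  also have "\<dots> = (\<Sum>p\<in>{p. p permutes {0..<k}}. (signof p * (\<Prod>i=0..<k. submatrix B \<alpha> \<beta> $$ (i, p i))) * (\<Prod>j\<in>{0..<k}. c (pick \<beta> j)))"
  proof (rule sum.cong[OF refl])
    fix p assume "p \<in> {p. p permutes {0..<k}}"
    hence p: "p permutes {0..<k}" by simp
    have pk: "\<And>i. i < k \<Longrightarrow> p i < k" using permutes_in_image[OF p] by auto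
    have "(\<Prod>i=0..<k. submatrix A \<alpha> \<beta> $$ (i, p i)) = (\<Prod>i=0..<k. submatrix B \<alpha> \<beta> $$ (i, p i) * c (pick \<beta> (p i)))"
      by (rule prod.cong[OF refl]) (use ent pk in auto)
    also have "\<dots> = (\<Prod>i=0..<k. submatrix B \<alpha> \<beta> $$ (i, p i)) * (\<Prod>i=0..<k. c (pick \<beta> (p i)))"
      by (rule prod.distrib)
    also have "(\<Prod>i=0..<k. c (pick \<beta> (p i))) = (\<Prod>j\<in>{0..<k}. c (pick \<beta> j))"
      using prod.permute[OF p, of "\<lambda>j. c (pick \<beta> j)"] by (simp add: o_def)
    finally show "signof p * (\<Prod>i=0..<k. submatrix A \<alpha> \<beta> $$ (i, p i)) =
        (signof p * (\<Prod>i=0..<k. submatrix B \<alpha> \<beta> $$ (i, p i))) * (\<Prod>j\<in>{0..<k}. c (pick \<beta> j))"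
      by (simp add: mult.assoc)
  qed
  also have "\<dots> = det (submatrix B \<alpha> \<beta>) * (\<Prod>j\<in>\<beta>. c j)"
    unfolding det_def'[OF SB] pc sum_distrib_right ..
  finally show ?thesis .
qed

lemma theorem_col:
  fixes A :: "complex mat" and \<nu> :: "complex vec \<Rightarrow> real" and \<eta> :: "(nat set \<Rightarrow> complex) \<Rightarrow> real"
  assumes k0: "0 < k" and kn: "k \<le> n" and nu: "vec_norm_on n \<nu>" and eta: "abs_vec_norm_on n k \<eta>"
    and A: "A \<in> carrier_mat n n" and les: "length es = n" and cp: "char_poly A = (\<Prod>i<n. [:- (es ! i), 1:])"
  shows "cmod (\<Prod>i<k. es ! i) \<le> theta n k \<eta> \<nu> * Max ((\<lambda>\<alpha>. \<Prod>i\<in>\<alpha>. \<nu> (col A i)) ` ksubsets n k)"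
proof -
  obtain x where xc: "x \<in> cvecs n k" and x0: "x \<noteq> (\<lambda>_. 0)"
    and eig: "cmat_apply n k (compound k A) x = (\<lambda>\<alpha>. (\<Prod>i<k. es ! i) * x \<alpha>)"
    using eigen_compound[OF A kn les cp] by blast
  obtain Kn where Kn0: "0 \<le> Kn" and Kn: "\<And>v i. v \<in> carrier_vec n \<Longrightarrow> i < n \<Longrightarrow> cmod (v $ i) \<le> Kn * \<nu> v"
    using nu_equiv[OF nu] by blast
  define R where "R = fact k * Kn ^ k"
  have Rb: "cmod (compound k B \<alpha> \<beta>) \<le> R" if B: "B \<in> carrier_mat n n" "\<forall>i<n. \<nu> (col B i) = 1" for B \<alpha> \<beta>
    unfolding R_def
  proof (rule compound_bound[OF B(1) _ Kn0])
    fix i j assume i: "i < n" and j: "j < n"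
    have "cmod (col B j $ i) \<le> Kn * \<nu> (col B j)" by (rule Kn) (use B i j in auto)
    thus "cmod (B $$ (i, j)) \<le> Kn" using B i j by simp
  qed
  have bdd: "bdd_above {op_norm n k \<eta> (compound k B) | B. B \<in> carrier_mat n n \<and> (\<forall>i<n. \<nu> (col B i) = 1)}"
  proof (rule bdd_aboveI[where M="R * C0 n k \<eta>"])
    fix y assume "y \<in> {op_norm n k \<eta> (compound k B) | B. B \<in> carrier_mat n n \<and> (\<forall>i<n. \<nu> (col B i) = 1)}"
    then obtain B where B: "B \<in> carrier_mat n n" "\<forall>i<n. \<nu> (col B i) = 1" and y: "y = op_norm n k \<eta> (compound k B)" by blast
    show "y \<le> R * C0 n k \<eta>" unfolding y by (rule op_norm_bound[OF eta Rb[OF B] kn])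
  qed
  have th: "op_norm n k \<eta> (compound k B) \<le> theta n k \<eta> \<nu>" if B: "B \<in> carrier_mat n n" "\<forall>i<n. \<nu> (col B i) = 1" for B
    unfolding theta_def by (rule cSup_upper[OF _ bdd]) (use B in blast)
  have n0: "0 < n" using k0 kn by simp
  define e0 where "e0 = (unit_vec n 0 :: complex vec)"
  have e0: "e0 \<in> carrier_vec n" unfolding e0_def by simp
  have e0nz: "e0 \<noteq> 0\<^sub>v n"
  proof
    assume "e0 = 0\<^sub>v n"
    hence "e0 $ 0 = 0\<^sub>v n $ 0" by simp
    thus False using n0 unfolding e0_def by simp
  qed
  have ne0: "\<nu> e0 > 0" using nu_D1[OF nu e0] e0nz by (simp add: less_le)
  define u0 where "u0 = complex_of_real (inverse (\<nu> e0)) \<cdot>\<^sub>v e0"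
  have u0: "u0 \<in> carrier_vec n" unfolding u0_def using e0 by simp
  have nu0: "\<nu> u0 = 1"
  proof -
    have "\<nu> u0 = cmod (complex_of_real (inverse (\<nu> e0))) * \<nu> e0" unfolding u0_def by (rule nu_scale[OF nu e0])
    also have "cmod (complex_of_real (inverse (\<nu> e0))) = inverse (\<nu> e0)" unfolding norm_of_real using ne0 by simp
    finally show ?thesis using ne0 by simp
  qed
  define d where "d = (\<lambda>j. \<nu> (col A j))"
  have d0: "0 \<le> d j" if "j < n" for j unfolding d_def by (rule conjunct1[OF nu_D1[OF nu]]) (use A that in simp)
  define B where "B = mat n n (\<lambda>(i,j). if d j = 0 then u0 $ i else A $$ (i,j) / complex_of_real (d j))"
  have Bc: "B \<in> carrier_mat n n" unfolding B_def by simp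
  have colB: "col B j = (if d j = 0 then u0 else complex_of_real (inverse (d j)) \<cdot>\<^sub>v col A j)" if j: "j < n" for j
    by (rule eq_vecI) (use j A u0 in \<open>auto simp: B_def divide_inverse mult.commute\<close>)
  have nB: "\<forall>i<n. \<nu> (col B i) = 1"
  proof (intro allI impI)
    fix j assume j: "j < n"
    show "\<nu> (col B j) = 1"
    proof (cases "d j = 0")
      case True thus ?thesis using colB[OF j] nu0 by simp
    next
      case False
      hence dp: "d j > 0" using d0[OF j] by simp
      have "\<nu> (col B j) = cmod (complex_of_real (inverse (d j))) * \<nu> (col A j)"
        using colB[OF j] False nu_scale[OF nu, of "col A j"] A j by simp
      also have "\<dots> = inverse (d j) * d j" unfolding norm_of_real d_def using dp d_def by simp
      finally show ?thesis using dp by simp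
    qed
  qed
  have AB: "A $$ (i,j) = B $$ (i,j) * complex_of_real (d j)" if i: "i < n" and j: "j < n" for i j
  proof (cases "d j = 0")
    case True
    hence "col A j = 0\<^sub>v n" using nu_D1[OF nu, of "col A j"] A j unfolding d_def by simp
    hence "col A j $ i = 0" using i by simp
    thus ?thesis using A i j True by simp
  next
    case False
    thus ?thesis using i j unfolding B_def by simp
  qed
  have cA: "compound k A \<alpha> \<beta> = compound k B \<alpha> \<beta> * (\<Prod>j\<in>\<beta>. complex_of_real (d j))"
    if a: "\<alpha> \<in> ksubsets n k" and b: "\<beta> \<in> ksubsets n k" for \<alpha> \<beta>
    using det_colscale[OF A Bc AB a b] a b A Bc unfolding compound_def by simp
  define Dm where "Dm = Max ((\<lambda>\<alpha>. \<Prod>i\<in>\<alpha>. \<nu> (col A i)) ` ksubsets n k)"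
  have Dm: "(\<Prod>j\<in>\<beta>. d j) \<le> Dm" if b: "\<beta> \<in> ksubsets n k" for \<beta>
    unfolding Dm_def d_def by (rule Max_ge) (use b finite_ksubsets in auto)
  have pd0: "0 \<le> (\<Prod>j\<in>\<beta>. d j)" if b: "\<beta> \<in> ksubsets n k" for \<beta>
    by (rule prod_nonneg) (use b ksub_finite(3)[OF b] d0 in auto)
  have K0: "{0..<k} \<in> ksubsets n k" using kn unfolding ksubsets_def by auto
  have Dm0: "0 \<le> Dm" using Dm[OF K0] pd0[OF K0] by linarith
  define y where "y = (\<lambda>\<beta>. (\<Prod>j\<in>\<beta>. complex_of_real (d j)) * x \<beta>)"
  have yc: "y \<in> cvecs n k" using xc unfolding y_def cvecs_def by auto
  have CAx: "cmat_apply n k (compound k A) x = cmat_apply n k (compound k B) y"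
  proof
    fix \<alpha> show "cmat_apply n k (compound k A) x \<alpha> = cmat_apply n k (compound k B) y \<alpha>"
    proof (cases "\<alpha> \<in> ksubsets n k")
      case False thus ?thesis unfolding cmat_apply_def by simp
    next
      case True
      have "(\<Sum>\<beta>\<in>ksubsets n k. compound k A \<alpha> \<beta> * x \<beta>) = (\<Sum>\<beta>\<in>ksubsets n k. compound k B \<alpha> \<beta> * y \<beta>)"
        by (rule sum.cong[OF refl]) (simp add: cA[OF True] y_def mult.assoc)
      thus ?thesis unfolding cmat_apply_def using True by simp
    qed
  qed
  have ey: "\<eta> y \<le> Dm * \<eta> x"
  proof -
    have "\<eta> y \<le> \<eta> (\<lambda>\<beta>. complex_of_real Dm * x \<beta>)"
    proof (rule eta_mono[OF eta yc])
      show "(\<lambda>\<beta>. complex_of_real Dm * x \<beta>) \<in> cvecs n k" using xc unfolding cvecs_def by auto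
      fix \<beta> show "cmod (y \<beta>) \<le> cmod (complex_of_real Dm * x \<beta>)"
      proof (cases "\<beta> \<in> ksubsets n k")
        case False thus ?thesis using xc unfolding y_def cvecs_def by simp
      next
        case True
        have "cmod (y \<beta>) = (\<Prod>j\<in>\<beta>. d j) * cmod (x \<beta>)"
          unfolding y_def norm_mult of_real_prod[symmetric] norm_of_real using pd0[OF True] by simp
        also have "\<dots> \<le> Dm * cmod (x \<beta>)" by (rule mult_right_mono[OF Dm[OF True]]) simp
        also have "\<dots> = cmod (complex_of_real Dm * x \<beta>)" unfolding norm_mult norm_of_real using Dm0 by simp
        finally show ?thesis .
      qed
    qed
    also have "\<dots> = Dm * \<eta> x" unfolding eta_scale[OF eta xc] norm_of_real using Dm0 by simp
    finally show ?thesis .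
  qed
  have ex: "0 < \<eta> x" by (rule eta_pos[OF eta xc x0])
  have th0: "0 \<le> theta n k \<eta> \<nu>"
  proof -
    have "\<eta> (cmat_apply n k (compound k B) x) / \<eta> x \<le> op_norm n k \<eta> (compound k B)"
      by (rule op_norm_ge[OF eta Rb[OF Bc nB] xc x0])
    moreover have "0 \<le> \<eta> (cmat_apply n k (compound k B) x) / \<eta> x"
      using eta_nonneg[OF eta cmat_apply_cvecs] ex by simp
    ultimately show ?thesis using th[OF Bc nB] by linarith
  qed
  have "cmod (\<Prod>i<k. es ! i) * \<eta> x = \<eta> (\<lambda>\<alpha>. (\<Prod>i<k. es ! i) * x \<alpha>)" by (rule eta_scale[OF eta xc, symmetric])
  also have "\<dots> = \<eta> (cmat_apply n k (compound k B) y)" unfolding eig[symmetric] CAx ..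
  also have "\<dots> \<le> op_norm n k \<eta> (compound k B) * \<eta> y" by (rule op_norm_apply[OF eta Rb[OF Bc nB] yc])
  also have "\<dots> \<le> theta n k \<eta> \<nu> * \<eta> y" by (rule mult_right_mono[OF th[OF Bc nB] eta_nonneg[OF eta yc]])
  also have "\<dots> \<le> theta n k \<eta> \<nu> * (Dm * \<eta> x)" by (rule mult_left_mono[OF ey th0])
  finally have "cmod (\<Prod>i<k. es ! i) * \<eta> x \<le> (theta n k \<eta> \<nu> * Dm) * \<eta> x" by (simp add: mult.assoc)
  hence "cmod (\<Prod>i<k. es ! i) \<le> theta n k \<eta> \<nu> * Dm" using ex by simp
  thus ?thesis unfolding Dm_def .
qed

theorem theorem3p1:
  fixes n k :: nat and \<nu> :: "complex vec \<Rightarrow> real" and \<eta> :: "(nat set \<Rightarrow> complex) \<Rightarrow> real"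
    and A :: "complex mat" and es :: "complex list"
  assumes "0 < k" and "k \<le> n"
    and "vec_norm_on n \<nu>"
    and "abs_vec_norm_on n k \<eta>"
    and "A \<in> carrier_mat n n"
    and "length es = n"
    and "char_poly A = (\<Prod>i<n. [:- (es ! i), 1:])"
    and "sorted_wrt (\<lambda>a b. cmod b \<le> cmod a) es"
  shows "cmod (\<Prod>i<k. es ! i) \<le> theta n k \<eta> \<nu> *
           min (Max ((\<lambda>\<alpha>. \<Prod>i\<in>\<alpha>. \<nu> (col A i)) ` ksubsets n k))
               (Max ((\<lambda>\<alpha>. \<Prod>i\<in>\<alpha>. \<nu> (row A i)) ` ksubsets n k))"
proof -
  have c1: "cmod (\<Prod>i<k. es ! i) \<le> theta n k \<eta> \<nu> * Max ((\<lambda>\<alpha>. \<Prod>i\<in>\<alpha>. \<nu> (col A i)) ` ksubsets n k)"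
    by (rule theorem_col[OF assms(1-7)])
  have At: "transpose_mat A \<in> carrier_mat n n" using assms(5) by simp
  have cpt: "char_poly (transpose_mat A) = (\<Prod>i<n. [:- (es ! i), 1:])"
    using char_poly_transpose_mat[OF assms(5)] assms(7) by simp
  have c2': "cmod (\<Prod>i<k. es ! i) \<le> theta n k \<eta> \<nu> * Max ((\<lambda>\<alpha>. \<Prod>i\<in>\<alpha>. \<nu> (col (transpose_mat A) i)) ` ksubsets n k)"
    by (rule theorem_col[OF assms(1-4) At assms(6) cpt])
  have "(\<lambda>\<alpha>. \<Prod>i\<in>\<alpha>. \<nu> (col (transpose_mat A) i)) ` ksubsets n k = (\<lambda>\<alpha>. \<Prod>i\<in>\<alpha>. \<nu> (row A i)) ` ksubsets n k"
  proof (rule image_cong[OF refl])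
    fix \<alpha> assume a: "\<alpha> \<in> ksubsets n k"
    show "(\<Prod>i\<in>\<alpha>. \<nu> (col (transpose_mat A) i)) = (\<Prod>i\<in>\<alpha>. \<nu> (row A i))"
      by (rule prod.cong[OF refl]) (use a assms(5) ksub_finite(3)[OF a] in auto)
  qed
  hence c2: "cmod (\<Prod>i<k. es ! i) \<le> theta n k \<eta> \<nu> * Max ((\<lambda>\<alpha>. \<Prod>i\<in>\<alpha>. \<nu> (row A i)) ` ksubsets n k)"
    using c2' by simp
  show ?thesis using c1 c2 by (simp add: min_def)
qed

end
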